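(* Let $n\ge 1$ and $x,y\in S_n$. Then there exist an integer $N\geq n$ and permutations $v,w\in S_N$ such that $P(v)=P(w)$, $v(i)=w(i)$ for all $i\leq N-n$, and the pattern of $v$ in the last $n$ positions is $x$ and the pattern of $w$ in the last $n$ positions is $y$.
   Context: Permutations are written in one-line notation. $P(w)$ denotes the Robinson--Schensted insertion tableau of $w\in S_N$, obtained by successively column inserting $w(N),w(N-1),\dots,w(1)$ into the empty tableau (column insertion of $a$: place $a$ in the first column, bumping the smallest entry of that column larger than $a$, if any, which is then inserted into the next column in the same way, and so on). For $x\in S_n$ and $v\in S_N$ with $n\le N$, the pattern of $v$ in the last $n$ positions is $x$ if for all $1\le i<j\le n$: $v(N-n+i)<v(N-n+j)$ if and only if $x(i)<x(j)$. *)

theory Defs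
  imports Main
begin

text \<open>Permutations of {1..N} in one-line notation, as lists: the list
  [w(1), ..., w(N)].\<close>
definition is_perm :: "nat \<Rightarrow> nat list \<Rightarrow> bool" where
  "is_perm N w \<longleftrightarrow> distinct w \<and> set w = {1..N}"

text \<open>Tableaux as lists of columns (each column listed top to bottom).\<close>
fun col_ins :: "nat \<Rightarrow> nat list list \<Rightarrow> nat list list" where
  "col_ins a [] = [[a]]"
| "col_ins a (c # cs) =
     (if \<exists>b\<in>set c. a < b
      then (let b = Min {b \<in> set c. a < b}
            in map (\<lambda>z. if z = b then a else z) c # col_ins b cs)
      else (c @ [a]) # cs)"

definition P_tab :: "nat list \<Rightarrow> nat list list" where
  "P_tab w = foldr col_ins w []"

text \<open>The pattern of v in its last n = length x positions is x
  (0-indexed lists: position N-n+i+1 in 1-indexed notation is index N-n+i).\<close>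
definition pattern_last :: "nat list \<Rightarrow> nat list \<Rightarrow> bool" where
  "pattern_last x v \<longleftrightarrow> length x \<le> length v \<and>
     (\<forall>i j. i < j \<and> j < length x \<longrightarrow>
        (v ! (length v - length x + i) < v ! (length v - length x + j) \<longleftrightarrow> x ! i < x ! j))"

end

theory Submission
  imports Defs
begin



definition sstep :: "nat \<Rightarrow> nat set \<Rightarrow> nat set \<times> nat list" where
  "sstep a C = (if \<exists>b\<in>C. a < b
     then (insert a (C - {Min {b\<in>C. a < b}}), [Min {b\<in>C. a < b}])
     else (insert a C, []))"

lemma sstep_some:
  assumes "finite C" "m \<in> C" "a < m" "\<And>b. b \<in> C \<Longrightarrow> a < b \<Longrightarrow> m \<le> b"
  shows "sstep a C = (insert a (C - {m}), [m])"
proof -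
  have "Min {b\<in>C. a < b} = m"
    using assms by (intro Min_eqI) auto
  then show ?thesis using assms unfolding sstep_def by auto
qed

lemma sstep_none:
  assumes "\<And>b. b \<in> C \<Longrightarrow> b < a"
  shows "sstep a C = (insert a C, [])"
  using assms unfolding sstep_def by force

definition inv_tab :: "nat list list \<Rightarrow> bool" where
  "inv_tab T \<longleftrightarrow> (\<forall>c\<in>set T. sorted_wrt (<) c) \<and> distinct (concat T)"

lemma sls_sorted:
  fixes xs :: "nat list"
  assumes "sorted_wrt (<) xs" shows "sorted_list_of_set (set xs) = xs"
  using assms by (simp add: sorted_list_of_set_sort_remdups strict_sorted_iff distinct_remdups_id sorted_sort_id)

lemma map_replace_sorted:
  fixes c :: "nat list"
  assumes "sorted_wrt (<) c" "m \<in> set c" "a < m" "a \<notin> set c"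
    "\<And>b. b \<in> set c \<Longrightarrow> a < b \<Longrightarrow> m \<le> b"
  shows "sorted_wrt (<) (map (\<lambda>z. if z = m then a else z) c)"
  using assms
proof (induction c)
  case Nil then show ?case by simp
next
  case (Cons v vs)
  show ?case
  proof (cases "v = m")
    case True
    have "\<forall>x\<in>set vs. v < x" using Cons.prems(1) by simp
    then have mv: "m \<notin> set vs" using True by auto
    have "map (\<lambda>z. if z = m then a else z) vs = vs" by (rule map_idI) (use mv in auto)
    then show ?thesis using True Cons.prems by auto
  next
    case False
    then have vs: "m \<in> set vs" using Cons.prems by auto
    have "v < m" using Cons.prems(1) vs by auto
    have "\<not> a < v" using Cons.prems(5)[of v] \<open>v < m\<close> by auto
    moreover have "v \<noteq> a" using Cons.prems(4) by auto
    ultimately have "v < a" by simp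
    have IH: "sorted_wrt (<) (map (\<lambda>z. if z = m then a else z) vs)"
      by (rule Cons.IH) (use Cons.prems vs in auto)
    have "\<forall>w\<in>set vs. v < (if w = m then a else w)"
      using Cons.prems(1) \<open>v < a\<close> by auto
    then show ?thesis using IH False by auto
  qed
qed

lemma col_ins_sorted:
  assumes "sorted_wrt (<) c" "a \<notin> set c"
  shows "col_ins a (c # cs) = sorted_list_of_set (fst (sstep a (set c))) # fold col_ins (snd (sstep a (set c))) cs"
proof (cases "\<exists>b\<in>set c. a < b")
  case True
  define m where "m = Min {b\<in>set c. a < b}"
  have fin: "finite {b\<in>set c. a < b}" by simp
  have "m \<in> {b\<in>set c. a < b}" unfolding m_def by (rule Min_in[OF fin]) (use True in auto)
  then have m: "m \<in> set c" "a < m" by auto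
  have mle: "\<And>b. b \<in> set c \<Longrightarrow> a < b \<Longrightarrow> m \<le> b" unfolding m_def using fin by auto
  have ss: "sstep a (set c) = (insert a (set c - {m}), [m])"
    using sstep_some[OF _ m mle] by simp
  have srt: "sorted_wrt (<) (map (\<lambda>z. if z = m then a else z) c)"
    using map_replace_sorted[OF assms(1) m assms(2) mle] .
  have st: "set (map (\<lambda>z. if z = m then a else z) c) = insert a (set c - {m})"
    using m by auto
  have "map (\<lambda>z. if z = m then a else z) c = sorted_list_of_set (insert a (set c - {m}))"
    using sls_sorted[OF srt] st by simp
  then show ?thesis using True ss unfolding m_def by (simp add: Let_def)
next
  case False
  have lt: "\<And>b. b \<in> set c \<Longrightarrow> b < a"
  proof -
    fix b assume "b \<in> set c"
    then have "\<not> a < b" "b \<noteq> a" using False assms(2) by auto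
    then show "b < a" by simp
  qed
  have ss: "sstep a (set c) = (insert a (set c), [])"
    using lt by (rule sstep_none)
  have "sorted_wrt (<) (c @ [a])" using assms(1) lt
    by (simp add: sorted_wrt_append)
  moreover have "set (c @ [a]) = insert a (set c)" by simp
  ultimately have "c @ [a] = sorted_list_of_set (insert a (set c))"
    using sls_sorted by metis
  then show ?thesis using False ss by simp
qed




fun srun :: "nat list \<Rightarrow> nat set \<Rightarrow> nat set \<times> nat list" where
  "srun [] C = (C, [])"
| "srun (a # as) C = (let (C1, b1) = sstep a C; (C2, bs) = srun as C1 in (C2, b1 @ bs))"

lemma sstep_fin: "finite C \<Longrightarrow> finite (fst (sstep a C))"
  unfolding sstep_def by auto

lemma sstep_sub: "finite C \<Longrightarrow> fst (sstep a C) \<subseteq> insert a C \<and> set (snd (sstep a C)) \<subseteq> C"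
  unfolding sstep_def using Min_in[of "{b\<in>C. a < b}"] by (auto split: if_splits)

lemma srun_sub: "finite C \<Longrightarrow> set (snd (srun as C)) \<subseteq> C \<union> set as \<and> fst (srun as C) \<subseteq> C \<union> set as"
proof (induction as arbitrary: C)
  case Nil
  then show ?case by simp
next
  case (Cons a as)
  obtain C1 b1 where s: "sstep a C = (C1, b1)" by fastforce
  have h: "C1 \<subseteq> insert a C" "set b1 \<subseteq> C" using sstep_sub[of C a] s Cons.prems by auto
  have "finite C1" using h Cons.prems finite_subset by blast
  then have "set (snd (srun as C1)) \<subseteq> C1 \<union> set as \<and> fst (srun as C1) \<subseteq> C1 \<union> set as"
    using Cons.IH by blast
  then show ?case using h s by (auto simp: split_beta)
qed

lemma srun_fin: "finite C \<Longrightarrow> finite (fst (srun as C))"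
  by (induction as arbitrary: C) (auto simp: split_beta sstep_fin)

lemma fold_col_ins_cons:
  assumes "sorted_wrt (<) c" "distinct as" "set as \<inter> set c = {}"
  shows "fold col_ins as (c # cs) =
     sorted_list_of_set (fst (srun as (set c))) # fold col_ins (snd (srun as (set c))) cs"
  using assms
proof (induction as arbitrary: c cs)
  case Nil
  then show ?case by (simp add: sls_sorted)
next
  case (Cons a as)
  obtain C1 b1 where s: "sstep a (set c) = (C1, b1)" by fastforce
  have fin: "finite C1" using sstep_fin[of "set c" a] s by auto
  have ci: "col_ins a (c # cs) = sorted_list_of_set C1 # fold col_ins b1 cs"
    using col_ins_sorted[of c a cs] Cons.prems s by auto
  have "C1 \<subseteq> insert a (set c)" using sstep_sub[of "set c" a] s by auto
  then have disj: "set as \<inter> set (sorted_list_of_set C1) = {}"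
    using Cons.prems fin by auto
  have "fold col_ins (a # as) (c # cs) = fold col_ins as (sorted_list_of_set C1 # fold col_ins b1 cs)"
    using ci by simp
  also have "\<dots> = sorted_list_of_set (fst (srun as C1)) # fold col_ins (snd (srun as C1)) (fold col_ins b1 cs)"
    using Cons.IH[of "sorted_list_of_set C1" "fold col_ins b1 cs"] Cons.prems disj fin
    by simp
  also have "\<dots> = sorted_list_of_set (fst (srun (a # as) (set c))) # fold col_ins (snd (srun (a # as) (set c))) cs"
    using s by (simp add: split_beta)
  finally show ?case .
qed




definition krel :: "nat list \<Rightarrow> nat list \<Rightarrow> bool" where
  "krel A B \<longleftrightarrow> A = B \<or> (\<exists>a b c. a < b \<and> b < c \<and>
     (A = [c,a,b] \<and> B = [a,c,b] \<or> A = [a,c,b] \<and> B = [c,a,b] \<or>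
      A = [b,c,a] \<and> B = [b,a,c] \<or> A = [b,a,c] \<and> B = [b,c,a]))"

lemma krel_sym: "krel A B \<Longrightarrow> krel B A"
  unfolding krel_def by blast

lemma krel_forms:
  assumes "a < b" "b < c"
  shows "krel [c,a,b] [a,c,b]" "krel [a,c,b] [c,a,b]" "krel [b,c,a] [b,a,c]" "krel [b,a,c] [b,c,a]"
  unfolding krel_def using assms by blast+

lemma srun3: "srun [a1,a2,a3] C =
  (fst (sstep a3 (fst (sstep a2 (fst (sstep a1 C))))),
   snd (sstep a1 C) @ snd (sstep a2 (fst (sstep a1 C))) @ snd (sstep a3 (fst (sstep a2 (fst (sstep a1 C))))))"
  by (simp add: split_beta)

lemma minI:
  fixes C :: "nat set"
  assumes "finite C" "\<exists>b\<in>C. a < b"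
  obtains m where "m \<in> C" "a < m" "\<And>b. b \<in> C \<Longrightarrow> a < b \<Longrightarrow> m \<le> b"
proof -
  have fin: "finite {b\<in>C. a < b}" using assms by simp
  have "Min {b\<in>C. a < b} \<in> {b\<in>C. a < b}" by (rule Min_in[OF fin]) (use assms in auto)
  moreover have "\<And>b. b \<in> C \<Longrightarrow> a < b \<Longrightarrow> Min {b\<in>C. a < b} \<le> b" using fin by auto
  ultimately show ?thesis using that by blast
qed

lemma colK1:
  assumes fin: "finite C" and xy: "x < y" and yz: "y < z" and nx: "x \<notin> C" and ny: "y \<notin> C" and nz: "z \<notin> C"
  shows "fst (srun [z,x,y] C) = fst (srun [x,z,y] C) \<and> krel (snd (srun [z,x,y] C)) (snd (srun [x,z,y] C))"
proof (cases "\<exists>b\<in>C. x < b")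
  case False
  then have lt: "\<And>b. b \<in> C \<Longrightarrow> b < x" using nx by (metis linorder_neqE_nat)
  have a1: "sstep z C = (insert z C, [])" by (rule sstep_none) (use lt xy yz in force)
  have a2: "sstep x (insert z C) = (insert x (insert z C - {z}), [z])"
    by (rule sstep_some) (use fin lt xy yz in force)+
  have a3: "sstep y (insert x (insert z C - {z})) = (insert y (insert x (insert z C - {z})), [])"
    by (rule sstep_none) (use lt xy yz in force)
  have b1: "sstep x C = (insert x C, [])" by (rule sstep_none) (use lt in force)
  have b2: "sstep z (insert x C) = (insert z (insert x C), [])" by (rule sstep_none) (use lt xy yz in force)
  have b3: "sstep y (insert z (insert x C)) = (insert y (insert z (insert x C) - {z}), [z])"
    by (rule sstep_some) (use fin lt xy yz in force)+
  have A: "srun [z,x,y] C = (insert y (insert x (insert z C - {z})), [z])"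
    by (simp only: srun3 a1 a2 a3 fst_conv snd_conv append.simps)
  have B: "srun [x,z,y] C = (insert y (insert z (insert x C) - {z}), [z])"
    by (simp only: srun3 b1 b2 b3 fst_conv snd_conv append.simps)
  show ?thesis unfolding A B krel_def using nz xy yz by auto
next
  case True
  obtain p where p: "p \<in> C" "x < p" and pmin: "\<And>b. b \<in> C \<Longrightarrow> x < b \<Longrightarrow> p \<le> b"
    using minI[OF fin True] by blast
  show ?thesis
  proof (cases "p < z")
    case pz: True
    have Dex: "\<And>D. finite D \<Longrightarrow> z \<in> D \<Longrightarrow> \<exists>b\<in>D. y < b" using yz by blast
    show ?thesis
    proof (cases "\<exists>b\<in>C. z < b")
      case True
      obtain r where r: "r \<in> C" "z < r" and rmin: "\<And>b. b \<in> C \<Longrightarrow> z < b \<Longrightarrow> r \<le> b"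
        using minI[OF fin True] by blast
      have a1: "sstep z C = (insert z (C - {r}), [r])" by (rule sstep_some) (use fin r rmin in auto)
      have a2: "sstep x (insert z (C - {r})) = (insert x (insert z (C - {r}) - {p}), [p])"
        by (rule sstep_some) (use fin p pmin pz r in auto)
      have b1: "sstep x C = (insert x (C - {p}), [p])" by (rule sstep_some) (use fin p pmin in auto)
      have b2: "sstep z (insert x (C - {p})) = (insert z (insert x (C - {p}) - {r}), [r])"
        by (rule sstep_some) (use fin r rmin pz xy yz in auto)
      define D where "D = insert x (insert z (C - {r}) - {p})"
      have DE: "insert z (insert x (C - {p}) - {r}) = D" unfolding D_def using pz r p nx nz xy yz by auto
      have finD: "finite D" unfolding D_def using fin by auto
      have zD: "z \<in> D" unfolding D_def using pz by auto
      obtain m where m: "m \<in> D" "y < m" and mmin: "\<And>b. b \<in> D \<Longrightarrow> y < b \<Longrightarrow> m \<le> b"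
        using minI[OF finD Dex[OF finD zD]] by blast
      have mz: "m \<le> z" using mmin[OF zD yz] .
      have pm: "p < m"
      proof -
        have "m = z \<or> (m \<in> C \<and> m \<noteq> p)" using m xy unfolding D_def by auto
        then show ?thesis using pz pmin m xy by (metis le_neq_implies_less less_trans)
      qed
      have s3: "sstep y D = (insert y (D - {m}), [m])" by (rule sstep_some) (use finD m mmin in auto)
      have A: "srun [z,x,y] C = (insert y (D - {m}), [r,p,m])"
        by (simp only: srun3 a1 a2 D_def[symmetric] s3 fst_conv snd_conv append.simps)
      have B: "srun [x,z,y] C = (insert y (D - {m}), [p,r,m])"
        by (simp only: srun3 b1 b2 DE s3 fst_conv snd_conv append.simps)
      have "m < r" using mz r(2) by simp
      then show ?thesis unfolding A B using pm krel_forms(1)[of p m r] by simp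
    next
      case False
      then have lt: "\<And>b. b \<in> C \<Longrightarrow> b < z" using nz by (metis linorder_neqE_nat)
      have a1: "sstep z C = (insert z C, [])" by (rule sstep_none) (use lt in auto)
      have a2: "sstep x (insert z C) = (insert x (insert z C - {p}), [p])"
        by (rule sstep_some) (use fin p pmin pz in auto)
      have b1: "sstep x C = (insert x (C - {p}), [p])" by (rule sstep_some) (use fin p pmin in auto)
      have b2: "sstep z (insert x (C - {p})) = (insert z (insert x (C - {p})), [])"
        by (rule sstep_none) (use lt xy yz in auto)
      define D where "D = insert x (insert z C - {p})"
      have DE: "insert z (insert x (C - {p})) = D" unfolding D_def using pz p nx nz xy yz by auto
      have A: "srun [z,x,y] C = (fst (sstep y D), [p] @ snd (sstep y D))"
        by (simp only: srun3 a1 a2 D_def[symmetric] fst_conv snd_conv append.simps)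
      have B: "srun [x,z,y] C = (fst (sstep y D), [p] @ snd (sstep y D))"
        by (simp only: srun3 b1 b2 DE fst_conv snd_conv append.simps)
      show ?thesis unfolding A B krel_def by auto
    qed
  next
    case False
    then have zp: "z < p" using p nz by (metis linorder_neqE_nat)
    have a1: "sstep z C = (insert z (C - {p}), [p])"
      by (rule sstep_some) (use fin p pmin zp xy yz in auto)
    have a2: "sstep x (insert z (C - {p})) = (insert x (insert z (C - {p}) - {z}), [z])"
    proof (rule sstep_some)
      fix b assume "b \<in> insert z (C - {p})" "x < b"
      then have "b = z \<or> (b \<in> C \<and> x < b)" by auto
      then show "z \<le> b" using pmin zp by fastforce
    qed (use fin xy yz in auto)
    have b1: "sstep x C = (insert x (C - {p}), [p])" by (rule sstep_some) (use fin p pmin in auto)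
    show ?thesis
    proof (cases "\<exists>b\<in>C. p < b")
      case True
      obtain p2 where p2: "p2 \<in> C" "p < p2" and p2min: "\<And>b. b \<in> C \<Longrightarrow> p < b \<Longrightarrow> p2 \<le> b"
        using minI[OF fin True] by blast
      have big: "\<And>b. b \<in> C \<Longrightarrow> b \<noteq> p \<Longrightarrow> x < b \<Longrightarrow> p2 \<le> b"
        using pmin p2min by (metis le_neq_implies_less)
      have a3: "sstep y (insert x (insert z (C - {p}) - {z})) = (insert y (insert x (insert z (C - {p}) - {z}) - {p2}), [p2])"
      proof (rule sstep_some)
        fix b assume "b \<in> insert x (insert z (C - {p}) - {z})" "y < b"
        then show "p2 \<le> b" using big xy by auto
      qed (use fin p2 zp xy yz nz in auto)
      have b2: "sstep z (insert x (C - {p})) = (insert z (insert x (C - {p}) - {p2}), [p2])"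
      proof (rule sstep_some)
        fix b assume "b \<in> insert x (C - {p})" "z < b"
        then show "p2 \<le> b" using big xy yz by auto
      qed (use fin p2 zp xy yz in auto)
      have b3: "sstep y (insert z (insert x (C - {p}) - {p2})) = (insert y (insert z (insert x (C - {p}) - {p2}) - {z}), [z])"
      proof (rule sstep_some)
        fix b assume b: "b \<in> insert z (insert x (C - {p}) - {p2})" "y < b"
        show "z \<le> b"
        proof (cases "b = z")
          case False
          then have "b \<in> C" "b \<noteq> p" "b \<noteq> p2" using b xy by auto
          then have "p2 < b" using big[of b] b xy by fastforce
          then show ?thesis using p2 zp by simp
        qed simp
      qed (use fin p2 zp xy yz in auto)
      have A: "srun [z,x,y] C = (insert y (insert x (insert z (C - {p}) - {z}) - {p2}), [p,z,p2])"
        by (simp only: srun3 a1 a2 a3 fst_conv snd_conv append.simps)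
      have B: "srun [x,z,y] C = (insert y (insert z (insert x (C - {p}) - {p2}) - {z}), [p,p2,z])"
        by (simp only: srun3 b1 b2 b3 fst_conv snd_conv append.simps)
      have eq: "insert y (insert x (insert z (C - {p}) - {z}) - {p2}) = insert y (insert z (insert x (C - {p}) - {p2}) - {z})"
        using nz p2 zp xy yz nx by auto
      show ?thesis unfolding A B eq using krel_forms(4)[of z p p2] zp p2 by simp
    next
      case False
      have small: "\<And>b. b \<in> C \<Longrightarrow> b \<noteq> p \<Longrightarrow> b < x"
        using False pmin nx by (metis le_neq_implies_less linorder_neqE_nat)
      have small_y: "\<And>b. b \<in> C \<Longrightarrow> b \<noteq> p \<Longrightarrow> b < y" using small xy less_trans by blast
      have a3: "sstep y (insert x (insert z (C - {p}) - {z})) = (insert y (insert x (insert z (C - {p}) - {z})), [])"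
        by (rule sstep_none) (use small_y xy in auto)
      have b2: "sstep z (insert x (C - {p})) = (insert z (insert x (C - {p})), [])"
        by (rule sstep_none) (use small xy yz in force)
      have b3: "sstep y (insert z (insert x (C - {p}))) = (insert y (insert z (insert x (C - {p})) - {z}), [z])"
      proof (rule sstep_some)
        fix b assume b: "b \<in> insert z (insert x (C - {p}))" "y < b"
        then show "z \<le> b" using small xy by fastforce
      qed (use fin yz in auto)
      have A: "srun [z,x,y] C = (insert y (insert x (insert z (C - {p}) - {z})), [p,z])"
        by (simp only: srun3 a1 a2 a3 fst_conv snd_conv append.simps)
      have B: "srun [x,z,y] C = (insert y (insert z (insert x (C - {p})) - {z}), [p,z])"
        by (simp only: srun3 b1 b2 b3 fst_conv snd_conv append.simps)
      have eq: "insert y (insert x (insert z (C - {p}) - {z})) = insert y (insert z (insert x (C - {p})) - {z})"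
        using nz zp xy yz nx by auto
      show ?thesis unfolding A B krel_def eq by simp
    qed
  qed
qed

lemma srun_cons: "srun (a # as) C = (fst (srun as (fst (sstep a C))), snd (sstep a C) @ snd (srun as (fst (sstep a C))))"
  by (simp add: split_beta)

lemma colK2aux:
  assumes fin: "finite D" and yD: "y \<in> D" and xy: "x < y" and yz: "y < z" and nx: "x \<notin> D" and nz: "z \<notin> D"
  shows "fst (srun [z,x] D) = fst (srun [x,z] D) \<and> (snd (srun [z,x] D) = snd (srun [x,z] D) \<or>
    (\<exists>r p. snd (srun [z,x] D) = [r,p] \<and> snd (srun [x,z] D) = [p,r] \<and> p \<le> y \<and> r \<in> D \<and> z < r))"
proof -
  have "\<exists>b\<in>D. x < b" using yD xy by blast
  then obtain p where p: "p \<in> D" "x < p" and pmin: "\<And>b. b \<in> D \<Longrightarrow> x < b \<Longrightarrow> p \<le> b"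
    using minI[OF fin] by blast
  have py: "p \<le> y" using pmin[OF yD xy] .
  have b1: "sstep x D = (insert x (D - {p}), [p])" by (rule sstep_some) (use fin p pmin in auto)
  show ?thesis
  proof (cases "\<exists>b\<in>D. z < b")
    case True
    obtain r where r: "r \<in> D" "z < r" and rmin: "\<And>b. b \<in> D \<Longrightarrow> z < b \<Longrightarrow> r \<le> b"
      using minI[OF fin True] by blast
    have a1: "sstep z D = (insert z (D - {r}), [r])" by (rule sstep_some) (use fin r rmin in auto)
    have a2: "sstep x (insert z (D - {r})) = (insert x (insert z (D - {r}) - {p}), [p])"
      by (rule sstep_some) (use fin p pmin py yz r in auto)
    have b2: "sstep z (insert x (D - {p})) = (insert z (insert x (D - {p}) - {r}), [r])"
      by (rule sstep_some) (use fin r rmin py xy yz in auto)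
    have A: "srun [z,x] D = (insert x (insert z (D - {r}) - {p}), [r,p])"
      by (simp only: srun_cons srun.simps a1 a2 fst_conv snd_conv append.simps)
    have B: "srun [x,z] D = (insert z (insert x (D - {p}) - {r}), [p,r])"
      by (simp only: srun_cons srun.simps b1 b2 fst_conv snd_conv append.simps)
    have eq: "insert x (insert z (D - {r}) - {p}) = insert z (insert x (D - {p}) - {r})"
      using p r py xy yz nx nz by auto
    show ?thesis unfolding A B eq using py r by auto
  next
    case False
    then have lt: "\<And>b. b \<in> D \<Longrightarrow> b < z" using nz by (metis linorder_neqE_nat)
    have a1: "sstep z D = (insert z D, [])" by (rule sstep_none) (use lt in auto)
    have a2: "sstep x (insert z D) = (insert x (insert z D - {p}), [p])"
      by (rule sstep_some) (use fin p pmin py yz in auto)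
    have b2: "sstep z (insert x (D - {p})) = (insert z (insert x (D - {p})), [])"
      by (rule sstep_none) (use lt xy yz in auto)
    have A: "srun [z,x] D = (insert x (insert z D - {p}), [p])"
      by (simp only: srun_cons srun.simps a1 a2 fst_conv snd_conv append.simps)
    have B: "srun [x,z] D = (insert z (insert x (D - {p})), [p])"
      by (simp only: srun_cons srun.simps b1 b2 fst_conv snd_conv append.simps)
    have eq: "insert x (insert z D - {p}) = insert z (insert x (D - {p}))"
      using p py xy yz nx nz by auto
    show ?thesis unfolding A B eq by auto
  qed
qed

lemma colK2:
  assumes fin: "finite C" and xy: "x < y" and yz: "y < z" and nx: "x \<notin> C" and ny: "y \<notin> C" and nz: "z \<notin> C"
  shows "fst (srun [y,z,x] C) = fst (srun [y,x,z] C) \<and> krel (snd (srun [y,z,x] C)) (snd (srun [y,x,z] C))"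
proof (cases "\<exists>b\<in>C. y < b")
  case True
  obtain q where q: "q \<in> C" "y < q" and qmin: "\<And>b. b \<in> C \<Longrightarrow> y < b \<Longrightarrow> q \<le> b"
    using minI[OF fin True] by blast
  have s1: "sstep y C = (insert y (C - {q}), [q])" by (rule sstep_some) (use fin q qmin in auto)
  define D where "D = insert y (C - {q})"
  have aux: "fst (srun [z,x] D) = fst (srun [x,z] D) \<and> (snd (srun [z,x] D) = snd (srun [x,z] D) \<or>
    (\<exists>r p. snd (srun [z,x] D) = [r,p] \<and> snd (srun [x,z] D) = [p,r] \<and> p \<le> y \<and> r \<in> D \<and> z < r))"
    by (rule colK2aux) (use fin xy yz nx nz q in \<open>auto simp: D_def\<close>)
  have A: "srun [y,z,x] C = (fst (srun [z,x] D), [q] @ snd (srun [z,x] D))"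
    by (simp only: srun_cons[of y] s1 D_def fst_conv snd_conv)
  have B: "srun [y,x,z] C = (fst (srun [x,z] D), [q] @ snd (srun [x,z] D))"
    by (simp only: srun_cons[of y] s1 D_def fst_conv snd_conv)
  show ?thesis
  proof (cases "snd (srun [z,x] D) = snd (srun [x,z] D)")
    case True
    then show ?thesis unfolding A B krel_def using aux by simp
  next
    case False
    then obtain r p where rp: "snd (srun [z,x] D) = [r,p]" "snd (srun [x,z] D) = [p,r]" "p \<le> y" "r \<in> D" "z < r"
      using aux by blast
    have "r \<in> C" "r \<noteq> q" using rp yz unfolding D_def by auto
    then have "q < r" using qmin[of r] rp yz by fastforce
    moreover have "p < q" using rp q by simp
    ultimately show ?thesis unfolding A B rp using aux krel_forms(3)[of p q r] by simp
  qed
next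
  case False
  have s1: "sstep y C = (insert y C, [])" by (rule sstep_none) (use False ny in \<open>metis linorder_neqE_nat\<close>)
  define D where "D = insert y C"
  have aux: "fst (srun [z,x] D) = fst (srun [x,z] D) \<and> (snd (srun [z,x] D) = snd (srun [x,z] D) \<or>
    (\<exists>r p. snd (srun [z,x] D) = [r,p] \<and> snd (srun [x,z] D) = [p,r] \<and> p \<le> y \<and> r \<in> D \<and> z < r))"
    by (rule colK2aux) (use fin xy yz nx nz in \<open>auto simp: D_def\<close>)
  have noR: "\<not> (\<exists>r. r \<in> D \<and> z < r)" using False yz unfolding D_def by auto
  have A: "srun [y,z,x] C = (fst (srun [z,x] D), [] @ snd (srun [z,x] D))"
    by (simp only: srun_cons[of y] s1 D_def fst_conv snd_conv)
  have B: "srun [y,x,z] C = (fst (srun [x,z] D), [] @ snd (srun [x,z] D))"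
    by (simp only: srun_cons[of y] s1 D_def fst_conv snd_conv)
  show ?thesis unfolding A B krel_def using aux noR by auto
qed




lemma sstep_cases:
  assumes "finite C"
  shows "sstep a C = (insert a C, []) \<or> (\<exists>m\<in>C. a < m \<and> sstep a C = (insert a (C - {m}), [m]))"
proof (cases "\<exists>b\<in>C. a < b")
  case True
  obtain m where m: "m \<in> C" "a < m" and mm: "\<And>b. b \<in> C \<Longrightarrow> a < b \<Longrightarrow> m \<le> b"
    using minI[OF assms True] by blast
  have "sstep a C = (insert a (C - {m}), [m])" by (rule sstep_some) (use assms m mm in auto)
  then show ?thesis using m by blast
qed (simp add: sstep_def)

lemma inv_tab_cons: "inv_tab (c # cs) \<longleftrightarrow> sorted_wrt (<) c \<and> inv_tab cs \<and> set c \<inter> set (concat cs) = {}"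
  unfolding inv_tab_def by (auto simp: strict_sorted_iff)

lemma col_ins_inv:
  "inv_tab T \<Longrightarrow> a \<notin> set (concat T) \<Longrightarrow>
   inv_tab (col_ins a T) \<and> set (concat (col_ins a T)) = insert a (set (concat T))"
proof (induction T arbitrary: a)
  case Nil
  then show ?case by (simp add: inv_tab_def)
next
  case (Cons c cs)
  have sc: "sorted_wrt (<) c" and ics: "inv_tab cs" and dj: "set c \<inter> set (concat cs) = {}"
    using Cons.prems(1) inv_tab_cons by auto
  have ac: "a \<notin> set c" "a \<notin> set (concat cs)" using Cons.prems(2) by auto
  have ci: "col_ins a (c # cs) = sorted_list_of_set (fst (sstep a (set c))) # fold col_ins (snd (sstep a (set c))) cs"
    using col_ins_sorted[OF sc ac(1)] .
  from sstep_cases[of "set c" a, OF List.finite_set] show ?case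
  proof
    assume s: "sstep a (set c) = (insert a (set c), [])"
    define L where "L = sorted_list_of_set (insert a (set c))"
    have L: "sorted_wrt (<) L" "set L = insert a (set c)" unfolding L_def
      by (rule strict_sorted_list_of_set, rule set_sorted_list_of_set, simp)
    have "inv_tab (L # cs)"
      unfolding inv_tab_cons using ics dj ac L by auto
    moreover have "col_ins a (c # cs) = L # cs"
      by (simp only: ci s fst_conv snd_conv fold.simps id_apply L_def)
    ultimately show ?thesis using L by simp
  next
    assume "\<exists>m\<in>set c. a < m \<and> sstep a (set c) = (insert a (set c - {m}), [m])"
    then obtain m where m: "m \<in> set c" "a < m" and s: "sstep a (set c) = (insert a (set c - {m}), [m])"
      by blast
    have mcs: "m \<notin> set (concat cs)" using m dj by auto
    have IH: "inv_tab (col_ins m cs) \<and> set (concat (col_ins m cs)) = insert m (set (concat cs))"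
      using Cons.IH[OF ics mcs] .
    define L where "L = sorted_list_of_set (insert a (set c - {m}))"
    have L: "sorted_wrt (<) L" "set L = insert a (set c - {m})" unfolding L_def
      by (rule strict_sorted_list_of_set, rule set_sorted_list_of_set, simp)
    have "inv_tab (L # col_ins m cs)"
      unfolding inv_tab_cons using IH dj ac m L by auto
    moreover have "set (concat (L # col_ins m cs)) = insert a (set (concat (c # cs)))"
      using IH m L by auto
    moreover have "col_ins a (c # cs) = L # col_ins m cs"
      by (simp only: ci s fst_conv snd_conv fold.simps id_apply L_def o_apply)
    ultimately show ?thesis by simp
  qed
qed

lemma P_tab_cons: "P_tab (a # s) = col_ins a (P_tab s)"
  unfolding P_tab_def by simp

lemma P_tab_inv: "distinct s \<Longrightarrow> inv_tab (P_tab s) \<and> set (concat (P_tab s)) = set s"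
proof (induction s)
  case Nil
  then show ?case by (simp add: P_tab_def inv_tab_def)
next
  case (Cons a s)
  then show ?case using col_ins_inv[of "P_tab s" a] by (simp add: P_tab_cons)
qed

lemma krel_props: "krel A B \<Longrightarrow> A \<noteq> B \<Longrightarrow> distinct A \<and> set B = set A"
  unfolding krel_def by auto

lemma col_krel:
  assumes "finite C" "krel A B" "set A \<inter> C = {}"
  shows "fst (srun A C) = fst (srun B C) \<and> krel (snd (srun A C)) (snd (srun B C))"
proof (cases "A = B")
  case True
  then show ?thesis by (simp add: krel_def)
next
  case False
  then obtain a b c where abc: "a < b" "b < c" and
    f: "A = [c,a,b] \<and> B = [a,c,b] \<or> A = [a,c,b] \<and> B = [c,a,b] \<or>
      A = [b,c,a] \<and> B = [b,a,c] \<or> A = [b,a,c] \<and> B = [b,c,a]"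
    using assms(2) unfolding krel_def by blast
  have n: "a \<notin> C" "b \<notin> C" "c \<notin> C" using f assms(3) by auto
  show ?thesis
    using f colK1[OF assms(1) abc n] colK2[OF assms(1) abc n] krel_sym by metis
qed

lemma knuth_main:
  "krel A B \<Longrightarrow> inv_tab T \<Longrightarrow> set A \<inter> set (concat T) = {} \<Longrightarrow> fold col_ins A T = fold col_ins B T"
proof (induction T arbitrary: A B)
  case Nil
  show ?case
  proof (cases "A = B")
    case False
    then obtain a b c where abc: "a < b" "b < c" and
      f: "A = [c,a,b] \<and> B = [a,c,b] \<or> A = [a,c,b] \<and> B = [c,a,b] \<or>
        A = [b,c,a] \<and> B = [b,a,c] \<or> A = [b,a,c] \<and> B = [b,c,a]"
      using Nil(1) unfolding krel_def by blast
    have e1: "{v. v = a \<and> b < v} = {}" "{v. v = a \<and> c < v} = {}" "{v. v = b \<and> c < v} = {}"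
      "{v. v = c \<and> a < v} = {c}" "{v. v = c \<and> b < v} = {c}" "{v. v = b \<and> a < v} = {b}"
      using abc by auto
    have e2: "{v. (v = a \<or> v = c) \<and> b < v} = {c}" "{v. (v = b \<or> v = c) \<and> a < v} = {b, c}"
      "{v. (v = a \<or> v = b) \<and> c < v} = {}"
      using abc by auto
    show ?thesis using f abc by (auto simp: e1 e2 Collect_conj_eq[symmetric])
  qed simp
next
  case (Cons c cs)
  show ?case
  proof (cases "A = B")
    case False
    have sc: "sorted_wrt (<) c" and ics: "inv_tab cs" and dj: "set c \<inter> set (concat cs) = {}"
      using Cons.prems(2) inv_tab_cons by auto
    have dA: "distinct A" "set B = set A" using krel_props[OF Cons.prems(1) False] by auto
    have djA: "set A \<inter> set c = {}" using Cons.prems(3) by auto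
    have fA: "fold col_ins A (c # cs) = sorted_list_of_set (fst (srun A (set c))) # fold col_ins (snd (srun A (set c))) cs"
      by (rule fold_col_ins_cons) (use sc dA djA in auto)
    have fB: "fold col_ins B (c # cs) = sorted_list_of_set (fst (srun B (set c))) # fold col_ins (snd (srun B (set c))) cs"
      by (rule fold_col_ins_cons) (use sc dA djA krel_props[OF krel_sym[OF Cons.prems(1)]] False in auto)
    have ck: "fst (srun A (set c)) = fst (srun B (set c)) \<and> krel (snd (srun A (set c))) (snd (srun B (set c)))"
      by (rule col_krel) (use Cons.prems djA in auto)
    have sub: "set (snd (srun A (set c))) \<subseteq> set c \<union> set A" using srun_sub[of "set c" A] by auto
    have "set (snd (srun A (set c))) \<inter> set (concat cs) = {}" using sub dj Cons.prems(3) by auto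
    then have "fold col_ins (snd (srun A (set c))) cs = fold col_ins (snd (srun B (set c))) cs"
      using Cons.IH ck ics by blast
    then show ?thesis using fA fB ck by simp
  qed simp
qed




inductive kstep :: "nat list \<Rightarrow> nat list \<Rightarrow> bool" where
  k1: "x < y \<Longrightarrow> y < z \<Longrightarrow> kstep (p @ [y,x,z] @ s) (p @ [y,z,x] @ s)"
| k2: "x < y \<Longrightarrow> y < z \<Longrightarrow> kstep (p @ [x,z,y] @ s) (p @ [z,x,y] @ s)"

inductive keq :: "nat list \<Rightarrow> nat list \<Rightarrow> bool" where
  krefl: "keq u u"
| kfwd: "keq u v \<Longrightarrow> kstep v w \<Longrightarrow> keq u w"
| kbwd: "keq u v \<Longrightarrow> kstep w v \<Longrightarrow> keq u w"

lemma kstep_ctx: "kstep v w \<Longrightarrow> kstep (a @ v @ b) (a @ w @ b)"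
proof (induction rule: kstep.induct)
  case (k1 x y z p s)
  then show ?case using kstep.k1[of x y z "a @ p" "s @ b"] by simp
next
  case (k2 x y z p s)
  then show ?case using kstep.k2[of x y z "a @ p" "s @ b"] by simp
qed

lemma kstep_sl: "kstep v w \<Longrightarrow> set v = set w \<and> length v = length w"
  by (induction rule: kstep.induct) auto

lemma kstep_distinct: "kstep v w \<Longrightarrow> distinct v \<longleftrightarrow> distinct w"
  using kstep_sl by (metis card_distinct distinct_card)

lemma keq_trans: "keq v w \<Longrightarrow> keq u v \<Longrightarrow> keq u w"
  by (induction rule: keq.induct) (auto intro: keq.intros)

lemma keq_step: "kstep v w \<Longrightarrow> keq v w"
  by (rule kfwd[OF krefl])

lemma keq_stepb: "kstep w v \<Longrightarrow> keq v w"
  by (rule kbwd[OF krefl])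

lemma keq_sym: "keq u v \<Longrightarrow> keq v u"
proof (induction rule: keq.induct)
  case (krefl u) then show ?case by (rule keq.krefl)
next
  case (kfwd u v w) then show ?case using keq_trans keq_stepb by blast
next
  case (kbwd u v w) then show ?case using keq_trans keq_step by blast
qed

lemma keq_ctx: "keq v w \<Longrightarrow> keq (a @ v @ b) (a @ w @ b)"
proof (induction rule: keq.induct)
  case (krefl u) then show ?case by (rule keq.krefl)
next
  case (kfwd u v w) then show ?case using kstep_ctx keq.kfwd by blast
next
  case (kbwd u v w) then show ?case using kstep_ctx keq.kbwd by blast
qed

lemma keq_sl: "keq v w \<Longrightarrow> set v = set w \<and> length v = length w"
  by (induction rule: keq.induct) (auto dest: kstep_sl)

lemma keq_distinct: "keq v w \<Longrightarrow> distinct v \<longleftrightarrow> distinct w"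
  using keq_sl by (metis card_distinct distinct_card)

lemma P_tab_append: "P_tab (p @ q) = foldr col_ins p (P_tab q)"
  unfolding P_tab_def by simp

lemma kstep_ptab: "kstep v w \<Longrightarrow> distinct v \<Longrightarrow> P_tab v = P_tab w"
proof (induction rule: kstep.induct)
  case (k1 x y z p s)
  have ds: "distinct s" and dj: "{x,y,z} \<inter> set s = {}" using k1.prems by auto
  have "fold col_ins [z,x,y] (P_tab s) = fold col_ins [x,z,y] (P_tab s)"
    by (rule knuth_main) (use krel_forms(1)[OF k1.hyps] P_tab_inv[OF ds] dj in auto)
  then show ?case by (simp add: P_tab_append P_tab_cons)
next
  case (k2 x y z p s)
  have ds: "distinct s" and dj: "{x,y,z} \<inter> set s = {}" using k2.prems by auto
  have "fold col_ins [y,z,x] (P_tab s) = fold col_ins [y,x,z] (P_tab s)"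
    by (rule knuth_main) (use krel_forms(3)[OF k2.hyps] P_tab_inv[OF ds] dj in auto)
  then show ?case by (simp add: P_tab_append P_tab_cons)
qed

lemma keq_ptab: "keq v w \<Longrightarrow> distinct v \<Longrightarrow> P_tab v = P_tab w"
proof (induction rule: keq.induct)
  case (krefl u) then show ?case by simp
next
  case (kfwd u v w)
  have "distinct v" using kfwd keq_distinct by blast
  then show ?case using kfwd kstep_ptab by simp
next
  case (kbwd u v w)
  have "distinct v" using kbwd keq_distinct by blast
  then have "distinct w" using kstep_distinct[OF kbwd(2)] by blast
  then show ?case using kbwd kstep_ptab by simp
qed

lemma rowA:
  "sorted_wrt (<) C \<Longrightarrow> a < p \<Longrightarrow> (\<forall>c\<in>set C. p < c) \<Longrightarrow> keq (p # C @ [a]) (p # a # C)"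
proof (induction C arbitrary: p)
  case Nil then show ?case by (simp add: krefl)
next
  case (Cons c C)
  have "keq (c # C @ [a]) (c # a # C)"
    using Cons.IH[of c] Cons.prems by auto
  then have h1: "keq ([p] @ (c # C @ [a]) @ []) ([p] @ (c # a # C) @ [])" by (rule keq_ctx)
  have "kstep ([] @ [p,a,c] @ C) ([] @ [p,c,a] @ C)"
    by (rule kstep.k1) (use Cons.prems in auto)
  then have h2: "keq (p # c # a # C) (p # a # c # C)" by (simp add: keq_stepb)
  have h1': "keq (p # c # C @ [a]) (p # c # a # C)" using h1 by simp
  show ?case using keq_trans[OF h2 h1'] by simp
qed

lemma rowB:
  "sorted_wrt (<) A \<Longrightarrow> (\<forall>x\<in>set A. x < y) \<Longrightarrow> y < b \<Longrightarrow> keq (A @ [b, y]) (b # A @ [y])"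
proof (induction A arbitrary: y rule: rev_induct)
  case Nil then show ?case by (simp add: krefl)
next
  case (snoc al A)
  have h1: "kstep (A @ [al,b,y] @ []) (A @ [b,al,y] @ [])"
    by (rule kstep.k2) (use snoc.prems in auto)
  have "keq (A @ [b, al]) (b # A @ [al])"
    using snoc.IH[of al] snoc.prems by (auto simp: sorted_wrt_append)
  then have h2: "keq ([] @ (A @ [b, al]) @ [y]) ([] @ (b # A @ [al]) @ [y])" by (rule keq_ctx)
  have h1': "keq (A @ [al,b,y]) (A @ [b,al,y])" using keq_step[OF h1] by simp
  have h2': "keq (A @ [b,al,y]) (b # A @ [al,y])" using h2 by simp
  show ?case using keq_trans[OF h2' h1'] by simp
qed

lemma row_lemma:
  assumes "sorted_wrt (<) (A @ [b] @ C)" "\<forall>x\<in>set A. x < a" "a < b"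
  shows "keq (A @ [b] @ C @ [a]) ([b] @ A @ [a] @ C)"
proof -
  have s: "sorted_wrt (<) C" "\<forall>c\<in>set C. b < c" "sorted_wrt (<) A"
    using assms(1) by (auto simp: sorted_wrt_append)
  have "keq (b # C @ [a]) (b # a # C)" by (rule rowA) (use s assms in auto)
  then have h1: "keq (A @ (b # C @ [a]) @ []) (A @ (b # a # C) @ [])" by (rule keq_ctx)
  have "keq (A @ [b, a]) (b # A @ [a])" by (rule rowB) (use s assms in auto)
  then have h2: "keq ([] @ (A @ [b, a]) @ C) ([] @ (b # A @ [a]) @ C)" by (rule keq_ctx)
  have h1': "keq (A @ b # C @ [a]) (A @ b # a # C)" using h1 by simp
  have h2': "keq (A @ b # a # C) (b # A @ a # C)" using h2 by simp
  show ?thesis using keq_trans[OF h2' h1'] by simp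
qed




definition fv :: "nat \<Rightarrow> nat \<Rightarrow> nat \<Rightarrow> nat" where "fv n i j = j * n + i + 1"
definition sh :: "nat set \<Rightarrow> nat \<Rightarrow> nat" where "sh Bs j = (if j \<in> Bs then 0 else 1)"
definition cell :: "nat \<Rightarrow> nat set \<Rightarrow> nat \<Rightarrow> nat \<Rightarrow> bool" where
  "cell n Bs i j \<longleftrightarrow> i + j + sh Bs j < n"
definition gv :: "nat \<Rightarrow> nat set \<Rightarrow> nat \<Rightarrow> nat \<Rightarrow> nat" where
  "gv n Bs i j = fv n (i + sh Bs j) j"
definition row :: "nat \<Rightarrow> nat set \<Rightarrow> nat \<Rightarrow> nat list" where
  "row n Bs i = map (gv n Bs i) (filter (cell n Bs i) [0..<n])"
definition rd :: "nat \<Rightarrow> nat set \<Rightarrow> nat list" where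
  "rd n Bs = concat (map (row n Bs) (rev [0..<n]))"

lemma mult_step: "j1 < (j2::nat) \<Longrightarrow> j1 * n + n \<le> j2 * n"
proof -
  assume "j1 < j2"
  then have "Suc j1 \<le> j2" by simp
  then have "Suc j1 * n \<le> j2 * n" by (rule mult_le_mono1)
  then show ?thesis by simp
qed

lemma gv_lt: "j1 < j2 \<Longrightarrow> j2 < n \<Longrightarrow> gv n Bs i j1 < gv n Bs i j2"
proof -
  assume a: "j1 < j2" "j2 < n"
  have "j1 * n + n \<le> j2 * n" using mult_step[OF a(1)] .
  moreover have "sh Bs j1 \<le> 1" "2 \<le> n" using a by (auto simp: sh_def)
  ultimately show ?thesis unfolding gv_def fv_def by linarith
qed

lemma gv_lt_fv: "j1 < j \<Longrightarrow> j < n \<Longrightarrow> gv n Bs i j1 < fv n i j"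
proof -
  assume a: "j1 < j" "j < n"
  have "j1 * n + n \<le> j * n" using mult_step[OF a(1)] .
  moreover have "sh Bs j1 \<le> 1" "2 \<le> n" using a by (auto simp: sh_def)
  ultimately show ?thesis unfolding gv_def fv_def by linarith
qed

lemma row_sorted: "sorted_wrt (<) (row n Bs i)"
  unfolding row_def sorted_wrt_map
  by (rule sorted_wrt_filter, rule sorted_wrt_mono_rel[OF _ sorted_wrt_upt]) (auto intro: gv_lt)

lemma upt_split: "j < n \<Longrightarrow> [0..<n] = [0..<j] @ j # [Suc j..<n]"
  by (metis le0 le_add_diff_inverse less_imp_le_nat upt_add_eq_append upt_conv_Cons)

lemma sh_other: "j' \<noteq> j \<Longrightarrow> sh (insert j Bs) j' = sh Bs j'"
  unfolding sh_def by auto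

lemma map_filter_other:
  assumes "j \<notin> set xs"
  shows "map (gv n (insert j Bs) i) (filter (cell n (insert j Bs) i) xs) = map (gv n Bs i) (filter (cell n Bs i) xs)"
proof -
  have sh: "\<And>x. x \<in> set xs \<Longrightarrow> sh (insert j Bs) x = sh Bs x"
    using assms sh_other by metis
  have "filter (cell n (insert j Bs) i) xs = filter (cell n Bs i) xs"
    by (rule filter_cong) (use sh in \<open>auto simp: cell_def\<close>)
  moreover have "\<And>j'. j' \<in> set xs \<Longrightarrow> gv n (insert j Bs) i j' = gv n Bs i j'"
    using sh by (simp add: gv_def)
  ultimately show ?thesis by simp
qed

lemma row_decomp:
  assumes "j < n" "j \<notin> Bs" "i + j + 1 < n"
  defines "A \<equiv> map (gv n Bs i) (filter (cell n Bs i) [0..<j])"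
    and "C \<equiv> map (gv n Bs i) (filter (cell n Bs i) [Suc j..<n])"
  shows "row n Bs i = A @ [fv n (i+1) j] @ C \<and> row n (insert j Bs) i = A @ [fv n i j] @ C"
proof -
  have c1: "cell n Bs i j" "cell n (insert j Bs) i j" using assms by (auto simp: cell_def sh_def)
  have g1: "gv n Bs i j = fv n (i+1) j" "gv n (insert j Bs) i j = fv n i j"
    using assms by (auto simp: gv_def sh_def)
  have o1: "map (gv n (insert j Bs) i) (filter (cell n (insert j Bs) i) [0..<j]) = A"
    unfolding A_def by (rule map_filter_other) simp
  have o2: "map (gv n (insert j Bs) i) (filter (cell n (insert j Bs) i) [Suc j..<n]) = C"
    unfolding C_def by (rule map_filter_other) simp
  show ?thesis unfolding row_def upt_split[OF assms(1)] using c1 g1 o1 o2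
    by (simp add: A_def C_def)
qed

lemma row_last:
  assumes "j < n" "j \<notin> Bs" "i + j + 1 = n"
  shows "row n (insert j Bs) i = row n Bs i @ [fv n i j]"
proof -
  have c1: "\<not> cell n Bs i j" "cell n (insert j Bs) i j" using assms by (auto simp: cell_def sh_def)
  have g1: "gv n (insert j Bs) i j = fv n i j"
    using assms by (auto simp: gv_def sh_def)
  have o1: "map (gv n (insert j Bs) i) (filter (cell n (insert j Bs) i) [0..<j]) = map (gv n Bs i) (filter (cell n Bs i) [0..<j])"
    by (rule map_filter_other) simp
  have e1: "filter (cell n Bs i) [Suc j..<n] = []" "filter (cell n (insert j Bs) i) [Suc j..<n] = []"
    using assms by (auto simp: filter_empty_conv cell_def)
  show ?thesis unfolding row_def upt_split[OF assms(1)] using c1 g1 o1 e1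
    by simp
qed

lemma row_high:
  assumes "j < n" "n \<le> i + j"
  shows "row n (insert j Bs) i = row n Bs i"
proof -
  have "map (gv n (insert j Bs) i) (filter (cell n (insert j Bs) i) [0..<j]) = map (gv n Bs i) (filter (cell n Bs i) [0..<j])"
    by (rule map_filter_other) simp
  moreover have "\<not> cell n Bs i j" "\<not> cell n (insert j Bs) i j" using assms by (auto simp: cell_def)
  moreover have "filter (cell n Bs i) [Suc j..<n] = []" "filter (cell n (insert j Bs) i) [Suc j..<n] = []"
    using assms by (auto simp: filter_empty_conv cell_def)
  ultimately show ?thesis unfolding row_def upt_split[OF assms(1)] by simp
qed

lemma chain:
  assumes j: "j < n" "j \<notin> Bs" and m: "m + j + 1 \<le> n"
  shows "keq (rd n Bs @ [fv n 0 j])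
    (concat (map (row n Bs) (rev [m..<n])) @ [fv n m j] @ concat (map (row n (insert j Bs)) (rev [0..<m])))"
  using m
proof (induction m)
  case 0
  then show ?case by (simp add: rd_def krefl)
next
  case (Suc m)
  have IH: "keq (rd n Bs @ [fv n 0 j])
    (concat (map (row n Bs) (rev [m..<n])) @ [fv n m j] @ concat (map (row n (insert j Bs)) (rev [0..<m])))"
    using Suc by simp
  have mn: "m < n" "m + j + 1 < n" using Suc.prems by auto
  define X where "X = concat (map (row n Bs) (rev [Suc m..<n]))"
  define Y where "Y = concat (map (row n (insert j Bs)) (rev [0..<m]))"
  have e1: "concat (map (row n Bs) (rev [m..<n])) = X @ row n Bs m"
    unfolding X_def using upt_conv_Cons[OF mn(1)] by simp
  have e2: "concat (map (row n (insert j Bs)) (rev [0..<Suc m])) = row n (insert j Bs) m @ Y"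
    unfolding Y_def by simp
  obtain A C where rw: "row n Bs m = A @ [fv n (m+1) j] @ C" "row n (insert j Bs) m = A @ [fv n m j] @ C"
    and A: "A = map (gv n Bs m) (filter (cell n Bs m) [0..<j])"
    using row_decomp[OF j mn(2)] by blast
  have Alt: "\<forall>x\<in>set A. x < fv n m j" using A gv_lt_fv j by auto
  have "keq (A @ [fv n (m+1) j] @ C @ [fv n m j]) ([fv n (m+1) j] @ A @ [fv n m j] @ C)"
    by (rule row_lemma) (use row_sorted[of n Bs m] rw Alt in \<open>auto simp: fv_def\<close>)
  then have "keq (X @ (A @ [fv n (m+1) j] @ C @ [fv n m j]) @ Y) (X @ ([fv n (m+1) j] @ A @ [fv n m j] @ C) @ Y)"
    by (rule keq_ctx)
  then have s2: "keq (X @ row n Bs m @ [fv n m j] @ Y) (X @ [fv n (Suc m) j] @ row n (insert j Bs) m @ Y)"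
    using rw by simp
  have s1: "keq (rd n Bs @ [fv n 0 j]) (X @ row n Bs m @ [fv n m j] @ Y)"
    using IH unfolding e1 Y_def[symmetric] by simp
  have s3: "keq (rd n Bs @ [fv n 0 j]) (X @ [fv n (Suc m) j] @ row n (insert j Bs) m @ Y)"
    using keq_trans[OF s2 s1] .
  show ?case unfolding e2 X_def[symmetric] using s3 by simp
qed

lemma key_step:
  assumes j: "j < n" "j \<notin> Bs"
  shows "keq (rd n Bs @ [fv n 0 j]) (rd n (insert j Bs))"
proof -
  define L where "L = n - 1 - j"
  have L: "L + j + 1 = n" using j unfolding L_def by simp
  have c: "keq (rd n Bs @ [fv n 0 j])
    (concat (map (row n Bs) (rev [L..<n])) @ [fv n L j] @ concat (map (row n (insert j Bs)) (rev [0..<L])))"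
    by (rule chain) (use j L in auto)
  have Ln: "L < n" using L by simp
  have hi: "concat (map (row n Bs) (rev [Suc L..<n])) = concat (map (row n (insert j Bs)) (rev [Suc L..<n]))"
    by (rule arg_cong[where f = concat], rule map_cong) (use row_high j L in auto)
  have hiL: "concat (map (row n Bs) (rev [L..<n])) @ [fv n L j] = concat (map (row n (insert j Bs)) (rev [L..<n]))"
    using upt_conv_Cons[OF Ln] hi row_last[OF j L] by simp
  have rv: "rev [0..<n] = rev [L..<n] @ rev [0..<L]"
    using upt_add_eq_append[of 0 L "n - L"] Ln by simp
  have r: "rd n (insert j Bs) = concat (map (row n (insert j Bs)) (rev [L..<n])) @ concat (map (row n (insert j Bs)) (rev [0..<L]))"
    unfolding rd_def rv by simp
  have E: "concat (map (row n Bs) (rev [L..<n])) @ [fv n L j] @ concat (map (row n (insert j Bs)) (rev [0..<L])) = rd n (insert j Bs)"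
    unfolding r hiL[symmetric] by simp
  show ?thesis using c unfolding E .
qed

lemma build:
  "distinct s \<Longrightarrow> set s \<subseteq> {0..<n} \<Longrightarrow> keq (rd n {} @ map (fv n 0) s) (rd n (set s))"
proof (induction s rule: rev_induct)
  case Nil then show ?case by (simp add: krefl)
next
  case (snoc j s)
  have IH: "keq (rd n {} @ map (fv n 0) s) (rd n (set s))" using snoc by auto
  have "keq ((rd n {} @ map (fv n 0) s) @ [fv n 0 j] @ []) (rd n (set s) @ [fv n 0 j] @ [])"
    using keq_ctx[OF IH, of "[]" "[fv n 0 j]"] by simp
  moreover have "keq (rd n (set s) @ [fv n 0 j]) (rd n (insert j (set s)))"
    by (rule key_step) (use snoc.prems in auto)
  ultimately show ?case using keq_trans by simp
qed




lemma fv_inj: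
  assumes "i < n" "i' < n" "fv n i j = fv n i' j'"
  shows "i = i' \<and> j = j'"
proof -
  have e: "i + j * n = i' + j' * n" using assms(3) unfolding fv_def by simp
  have "(i + j * n) mod n = i" "(i' + j' * n) mod n = i'" using assms(1,2) by simp_all
  then have ii: "i = i'" using e by simp
  have "n > 0" using assms by simp
  then have "j = j'" using e ii by simp
  then show ?thesis using ii by simp
qed

lemma row_full: "row n {0..<n} i = map (fv n i) (filter (\<lambda>j. i + j < n) [0..<n])"
proof -
  have "filter (cell n {0..<n} i) [0..<n] = filter (\<lambda>j. i + j < n) [0..<n]"
    by (rule filter_cong) (auto simp: cell_def sh_def)
  moreover have "\<And>j. j \<in> set [0..<n] \<Longrightarrow> gv n {0..<n} i j = fv n i j"
    by (auto simp: gv_def sh_def)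
  ultimately show ?thesis unfolding row_def by simp
qed

lemma distinct_concat_map:
  "distinct L \<Longrightarrow> (\<forall>i\<in>set L. distinct (f i)) \<Longrightarrow>
   (\<forall>i\<in>set L. \<forall>i'\<in>set L. i \<noteq> i' \<longrightarrow> set (f i) \<inter> set (f i') = {}) \<Longrightarrow> distinct (concat (map f L))"
  by (induction L) auto

lemma rd_full: "distinct (rd n {0..<n}) \<and> set (rd n {0..<n}) \<subseteq> {1..n*n}"
proof
  show "distinct (rd n {0..<n})"
    unfolding rd_def
  proof (rule distinct_concat_map)
    show "\<forall>i\<in>set (rev [0..<n]). distinct (row n {0..<n} i)"
      using row_sorted strict_sorted_iff by blast
    show "\<forall>i\<in>set (rev [0..<n]). \<forall>i'\<in>set (rev [0..<n]). i \<noteq> i' \<longrightarrow> set (row n {0..<n} i) \<inter> set (row n {0..<n} i') = {}"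
    proof (intro ballI impI)
      fix i i' assume ii: "i \<in> set (rev [0..<n])" "i' \<in> set (rev [0..<n])" "i \<noteq> i'"
      show "set (row n {0..<n} i) \<inter> set (row n {0..<n} i') = {}"
      proof (rule ccontr)
        assume "set (row n {0..<n} i) \<inter> set (row n {0..<n} i') \<noteq> {}"
        then obtain v where v1: "v \<in> set (row n {0..<n} i)" and v2: "v \<in> set (row n {0..<n} i')" by blast
        obtain j where jj1: "v = fv n i j" "i + j < n" using v1 unfolding row_full by auto
        obtain j' where jj2: "v = fv n i' j'" "i' + j' < n" using v2 unfolding row_full by auto
        have jj: "v = fv n i j" "i + j < n" "v = fv n i' j'" "i' + j' < n" using jj1 jj2 by auto
        then have "i = i'" using fv_inj[of i n i' j j'] by simp
        then show False using ii by simp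
      qed
    qed
  qed simp
  show "set (rd n {0..<n}) \<subseteq> {1..n*n}"
  proof
    fix v assume "v \<in> set (rd n {0..<n})"
    then obtain i j where ij: "i + j < n" "v = fv n i j" unfolding rd_def row_full by auto
    have "j * n + n \<le> n * n" using mult_le_mono1[of "Suc j" n n] ij by simp
    then show "v \<in> {1..n*n}" using ij unfolding fv_def by simp
  qed
qed

lemma perm_facts:
  assumes "is_perm n x"
  shows "length x = n" "distinct (map (\<lambda>k. k - 1) x)" "set (map (\<lambda>k. k - 1) x) = {0..<n}"
    "\<And>i. i < n \<Longrightarrow> x ! i \<in> {1..n}"
proof -
  have d: "distinct x" and s: "set x = {1..n}" using assms unfolding is_perm_def by auto
  show l: "length x = n" using distinct_card[OF d] s by simp
  have "inj_on (\<lambda>k. k - 1) (set x)" using s by (auto simp: inj_on_def)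
  then show "distinct (map (\<lambda>k. k - 1) x)" using d by (simp add: distinct_map)
  have "(\<lambda>k. k - 1) ` {1..n} = {0..<n}"
  proof
    show "(\<lambda>k. k - 1) ` {1..n} \<subseteq> {0..<n}" by auto
    show "{0..<n} \<subseteq> (\<lambda>k. k - 1) ` {1..n}"
    proof
      fix m assume "m \<in> {0..<n}"
      then have "Suc m \<in> {1..n}" "m = Suc m - 1" by auto
      then show "m \<in> (\<lambda>k. k - 1) ` {1..n}" by blast
    qed
  qed
  then show "set (map (\<lambda>k. k - 1) x) = {0..<n}" using s by simp
  fix i assume "i < n"
  then have "x ! i \<in> set x" using l by simp
  then show "x ! i \<in> {1..n}" using s by simp
qed

lemma fv_cmp:
  assumes "1 \<le> n" "a \<in> {1..n}" "b \<in> {1..n}"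
  shows "fv n 0 (a - 1) < fv n 0 (b - 1) \<longleftrightarrow> a < b"
proof -
  have "fv n 0 (a - 1) < fv n 0 (b - 1) \<longleftrightarrow> (a - 1) * n < (b - 1) * n" unfolding fv_def by simp
  also have "\<dots> \<longleftrightarrow> a - 1 < b - 1" using assms(1) by simp
  also have "\<dots> \<longleftrightarrow> a < b" using assms(2,3) by auto
  finally show ?thesis .
qed

theorem theorem2p4:
  fixes n :: nat and x y :: "nat list"
  assumes "n \<ge> 1" and "is_perm n x" and "is_perm n y"
  shows "\<exists>N \<ge> n. \<exists>v w. is_perm N v \<and> is_perm N w \<and> P_tab v = P_tab w \<and>
           (\<forall>i < N - n. v ! i = w ! i) \<and> pattern_last x v \<and> pattern_last y w"
proof -
  define N where "N = n * n"
  define sx where "sx = map (\<lambda>k. k - 1) x"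
  define sy where "sy = map (\<lambda>k. k - 1) y"
  define U where "U = rd n {}"
  define v1 where "v1 = U @ map (fv n 0) sx"
  define w1 where "w1 = U @ map (fv n 0) sy"
  note px = perm_facts[OF assms(2)]
  note py = perm_facts[OF assms(3)]
  have kv: "keq v1 (rd n {0..<n})" using build[of sx n] px unfolding v1_def sx_def U_def by simp
  have kw: "keq w1 (rd n {0..<n})" using build[of sy n] py unfolding w1_def sy_def U_def by simp
  have full: "distinct (rd n {0..<n})" "set (rd n {0..<n}) \<subseteq> {1..N}" using rd_full[of n] unfolding N_def by auto
  have dv1: "distinct v1" using keq_distinct[OF kv] full by simp
  have sv1: "set v1 = set (rd n {0..<n})" using keq_sl[OF kv] by simp
  have sw1: "set w1 = set v1" using keq_sl[OF kw] sv1 by simp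
  have dw1: "distinct w1" using keq_distinct[OF kw] full by simp
  have kvw: "keq v1 w1" using keq_trans[OF keq_sym[OF kw] kv] .
  have Peq: "P_tab v1 = P_tab w1" using keq_ptab[OF kvw dv1] .
  define F where "F = filter (\<lambda>m. m \<notin> set v1) [1..<N+1]"
  define v where "v = F @ v1"
  define w where "w = F @ w1"
  have setF: "set F = {1..N} - set v1" unfolding F_def by auto
  have pv: "is_perm N v" unfolding is_perm_def v_def using dv1 setF sv1 full
    by (auto simp: F_def)
  have pw: "is_perm N w" unfolding is_perm_def w_def using dw1 setF sw1 sv1 full
    by (auto simp: F_def)
  have lv: "length v = N" using pv unfolding is_perm_def using distinct_card by fastforce
  have lw: "length w = N" using pw unfolding is_perm_def using distinct_card by fastforce
  have nN: "n \<le> N" unfolding N_def using assms(1) by simp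
  have lsx: "length sx = n" "length sy = n" using px(1) py(1) unfolding sx_def sy_def by auto
  have lpre: "length (F @ U) = N - n" using lv lsx unfolding v_def v1_def by simp
  have vdec: "v = (F @ U) @ map (fv n 0) sx" unfolding v_def v1_def by simp
  have wdec: "w = (F @ U) @ map (fv n 0) sy" unfolding w_def w1_def by simp
  have pre: "\<forall>i < N - n. v ! i = w ! i"
  proof (intro allI impI)
    fix i assume "i < N - n"
    then have li: "i < length (F @ U)" using lpre by simp
    have "\<And>ys. ((F @ U) @ ys) ! i = (F @ U) ! i" using li by (rule nth_append_left)
    then show "v ! i = w ! i" unfolding vdec wdec by simp
  qed
  have PT: "P_tab v = P_tab w" unfolding v_def w_def P_tab_append Peq ..
  have patv: "pattern_last x v"
    unfolding pattern_last_def
  proof (intro conjI allI impI)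
    show "length x \<le> length v" using px(1) lv nN by simp
    fix i j assume ij: "i < j \<and> j < length x"
    have e: "\<And>k. k < n \<Longrightarrow> v ! (length v - length x + k) = fv n 0 (x ! k - 1)"
    proof -
      fix k assume k: "k < n"
      have "length v - length x + k = length (F @ U) + k" using lpre lv px(1) by simp
      then show "v ! (length v - length x + k) = fv n 0 (x ! k - 1)"
        unfolding vdec using k lsx px(1) by (simp add: nth_append sx_def)
    qed
    show "(v ! (length v - length x + i) < v ! (length v - length x + j)) = (x ! i < x ! j)"
      using e ij px fv_cmp[OF assms(1)] by simp
  qed
  have patw: "pattern_last y w"
    unfolding pattern_last_def
  proof (intro conjI allI impI)
    show "length y \<le> length w" using py(1) lw nN by simp
    fix i j assume ij: "i < j \<and> j < length y"
    have e: "\<And>k. k < n \<Longrightarrow> w ! (length w - length y + k) = fv n 0 (y ! k - 1)"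
    proof -
      fix k assume k: "k < n"
      have "length w - length y + k = length (F @ U) + k" using lpre lw py(1) by simp
      then show "w ! (length w - length y + k) = fv n 0 (y ! k - 1)"
        unfolding wdec using k lsx py(1) by (simp add: nth_append sy_def)
    qed
    show "(w ! (length w - length y + i) < w ! (length w - length y + j)) = (y ! i < y ! j)"
      using e ij py fv_cmp[OF assms(1)] by simp
  qed
  show ?thesis using nN pv pw PT pre patv patw by blast
qed


end
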